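(* Let $\mathcal{A}$ be a complex Banach algebra with identity, $\lambda$ a nonzero complex number, and $M = \begin{pmatrix} A & B \\ C & D \end{pmatrix} \in M_2(\mathcal{A})$ with $A, D \in \mathcal{A}^d$. Suppose $BC, CB \in \mathcal{A}^d$, and $$AB = \lambda A^\pi B D (CB)^\pi \quad\text{and}\quad DC = \lambda D^\pi C A (BC)^\pi.$$ Put $P = \begin{pmatrix} A & 0 \\ 0 & D \end{pmatrix}$ and $Q = \begin{pmatrix} 0 & B \\ C & 0 \end{pmatrix}$, so $M=P+Q$, $P^d=\begin{pmatrix} A^d & 0 \\ 0 & D^d \end{pmatrix}$, $Q^d=\begin{pmatrix} 0 & B(CB)^d \\ C(BC)^d & 0 \end{pmatrix}$. Then $M \in M_2(\mathcal{A})^d$ and $$\begin{aligned} M^d ={}& \begin{pmatrix} (BC)^\pi A^d & B(CB)^d D^\pi \\ C(BC)^d A^\pi & (CB)^\pi D^d \end{pmatrix} + \sum_{n=0}^{\infty} (Q^d)^{n+2} P M^n P^\pi + Q^\pi \sum_{n=0}^{\infty} M^n Q (P^d)^{n+2} \\ &- \sum_{n=0}^{\infty} \sum_{k=0}^{\infty} (Q^d)^{k+1} P M^{n+k} Q (P^d)^{n+2} - \sum_{n=0}^{\infty} (Q^d)^{n+2} P M^n Q P^d.\end{aligned}$$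
   Context: $M_2(\mathcal{A})$ is the Banach algebra of $2\times 2$ matrices over $\mathcal{A}$. An element $x$ of a Banach algebra has a generalized Drazin (g-Drazin) inverse $x^d$ if $x^d$ commutes with $x$, $x^d = x^dxx^d$ and $x - x^2x^d$ is quasinilpotent (i.e. $\lim\|y^n\|^{1/n}=0$ for $y=x-x^2x^d$); $\mathcal{A}^d$ (resp. $M_2(\mathcal{A})^d$) denotes the set of g-Drazin invertible elements. The spectral idempotent is $x^\pi = 1 - xx^d$. *)

theory Defs
  imports "HOL-Analysis.Analysis"
begin

class cbanach_algebra = real_normed_algebra_1 + banach +
  fixes scaleC :: "complex \<Rightarrow> 'a \<Rightarrow> 'a"
  assumes scaleC_add_right: "scaleC a (x + y) = scaleC a x + scaleC a y"
    and scaleC_add_left: "scaleC (a + b) x = scaleC a x + scaleC b x"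
    and scaleC_scaleC: "scaleC a (scaleC b x) = scaleC (a * b) x"
    and scaleC_one: "scaleC 1 x = x"
    and scaleC_of_real: "scaleC (of_real r) x = scaleR r x"
    and norm_scaleC: "norm (scaleC a x) = cmod a * norm x"
    and scaleC_left_mult: "scaleC a x * y = scaleC a (x * y)"
    and scaleC_right_mult: "x * scaleC a y = scaleC a (x * y)"

definition quasinilpotent :: "'a::real_normed_algebra_1 \<Rightarrow> bool" where
  "quasinilpotent y \<longleftrightarrow> (\<lambda>n. root n (norm (y ^ n))) \<longlonglongrightarrow> 0"

definition is_gdrazin :: "'a::real_normed_algebra_1 \<Rightarrow> 'a \<Rightarrow> bool" where
  "is_gdrazin x y \<longleftrightarrow> x * y = y * x \<and> y = y * x * y \<and> quasinilpotent (x - x * x * y)"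

definition gd_set :: "'a::real_normed_algebra_1 set" where
  "gd_set = {x. \<exists>y. is_gdrazin x y}"

definition gd :: "'a::real_normed_algebra_1 \<Rightarrow> 'a" where
  "gd x = (THE y. is_gdrazin x y)"

definition gpi :: "'a::real_normed_algebra_1 \<Rightarrow> 'a" where
  "gpi x = 1 - x * gd x"

text \<open>M_2(A) is modelled as the type of 2x2 arrays with the matrix product (**),
  identity (mat 1) and the (equivalent) Euclidean-type norm of the vector type.\<close>

definition mat2 :: "'a::zero \<Rightarrow> 'a \<Rightarrow> 'a \<Rightarrow> 'a \<Rightarrow> 'a^2^2" where
  "mat2 a b c d = (\<chi> i j. if i = 1 then (if j = 1 then a else b) else (if j = 1 then c else d))"

primrec mpow :: "('a::semiring_1)^'n^'n \<Rightarrow> nat \<Rightarrow> 'a^'n^'n" where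
  "mpow X 0 = mat 1"
| "mpow X (Suc n) = X ** mpow X n"

definition mquasinilpotent :: "('a::real_normed_algebra_1)^2^2 \<Rightarrow> bool" where
  "mquasinilpotent Y \<longleftrightarrow> (\<lambda>n. root n (norm (mpow Y n))) \<longlonglongrightarrow> 0"

definition mis_gdrazin :: "('a::real_normed_algebra_1)^2^2 \<Rightarrow> 'a^2^2 \<Rightarrow> bool" where
  "mis_gdrazin X Y \<longleftrightarrow> X ** Y = Y ** X \<and> Y = Y ** X ** Y \<and> mquasinilpotent (X - X ** X ** Y)"

definition mgd_set :: "(('a::real_normed_algebra_1, 2) vec, 2) vec set" where
  "mgd_set = {X. \<exists>Y. mis_gdrazin X Y}"

definition mgd :: "('a::real_normed_algebra_1)^2^2 \<Rightarrow> 'a^2^2" where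
  "mgd X = (THE Y. mis_gdrazin X Y)"

definition mpi :: "('a::real_normed_algebra_1)^2^2 \<Rightarrow> 'a^2^2" where
  "mpi X = mat 1 - X ** mgd X"

end

theory Submission
  imports Defs
begin

definition qnb :: "(nat \<Rightarrow> real) \<Rightarrow> bool" where
  "qnb f \<longleftrightarrow> (\<forall>e>0. \<exists>C. \<forall>n. f n \<le> C * e ^ n)"

lemma qnb_of_root:
  assumes nn: "\<And>n. 0 \<le> f n" and lim: "(\<lambda>n. root n (f n)) \<longlonglongrightarrow> 0"
  shows "qnb f"
  unfolding qnb_def
proof (intro allI impI)
  fix e :: real assume e: "e > 0"
  from lim e obtain N where N: "\<And>n. n \<ge> N \<Longrightarrow> norm (root n (f n) - 0) < e"
    unfolding LIMSEQ_def dist_real_def by auto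
  define C where "C = 1 + (\<Sum>i<Suc N. f i / e ^ i)"
  show "\<exists>C. \<forall>n. f n \<le> C * e ^ n"
  proof (intro exI allI)
    fix n
    have S: "0 \<le> (\<Sum>i<Suc N. f i / e ^ i)" using nn e by (intro sum_nonneg) auto
    show "f n \<le> C * e ^ n"
    proof (cases "n \<le> N")
      case True
      have "f n / e ^ n \<le> (\<Sum>i<Suc N. f i / e ^ i)"
        using True nn e by (intro member_le_sum) auto
      hence "f n / e ^ n \<le> C" unfolding C_def by simp
      thus ?thesis using e by (simp add: divide_le_eq mult.commute)
    next
      case False
      hence n0: "n > 0" "n \<ge> N" by auto
      have r: "root n (f n) < e" using N[OF n0(2)] nn by simp
      have "f n = root n (f n) ^ n" using n0 nn by simp
      also have "\<dots> \<le> e ^ n" using r nn n0 by (intro power_mono) auto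
      also have "\<dots> \<le> C * e ^ n" using S e unfolding C_def by simp
      finally show ?thesis .
    qed
  qed
qed

lemma root_of_qnb:
  assumes nn: "\<And>n. 0 \<le> f n" and q: "qnb f"
  shows "(\<lambda>n. root n (f n)) \<longlonglongrightarrow> 0"
  unfolding LIMSEQ_def dist_real_def
proof (intro allI impI)
  fix e :: real assume e: "e > 0"
  have e2: "e/2 > 0" using e by simp
  with q obtain C where C: "\<And>n. f n \<le> C * (e/2) ^ n" unfolding qnb_def
    by blast
  have C0: "C \<ge> 0" using C[of 0] nn[of 0] by simp
  have "(\<lambda>n. root n (C + 1)) \<longlonglongrightarrow> 1" using C0 by (intro LIMSEQ_root_const) auto
  from this[unfolded LIMSEQ_def, rule_format, of "1/2::real"]
  obtain N where N: "\<And>n. n \<ge> N \<Longrightarrow> dist (root n (C + 1)) 1 < 1/2"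
    by auto
  show "\<exists>N. \<forall>n\<ge>N. \<bar>root n (f n) - 0\<bar> < e"
  proof (intro exI[of _ "Suc N"] allI impI)
    fix n assume n: "n \<ge> Suc N"
    hence n0: "n > 0" by simp
    have "root n (f n) \<le> root n ((C + 1) * (e/2) ^ n)"
    proof -
      have "C * (e/2) ^ n \<le> (C + 1) * (e/2) ^ n" using e by (intro mult_right_mono) auto
      hence "f n \<le> (C + 1) * (e/2) ^ n" using C[of n] by linarith
      thus ?thesis using n0 by simp
    qed
    also have "\<dots> = root n (C + 1) * (e / 2)"
      using n0 e by (simp add: real_root_mult real_root_power_cancel)
    also have "\<dots> < 3/2 * (e/2)"
    proof -
      have "dist (root n (C + 1)) 1 < 1/2" using N[of n] n by simp
      hence "root n (C + 1) < 3/2" unfolding dist_real_def by arith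
      thus ?thesis using e by (intro mult_strict_right_mono) auto
    qed
    also have "\<dots> < e" using e by simp
    finally show "\<bar>root n (f n) - 0\<bar> < e" using nn n0 by simp
  qed
qed

lemma qnb_nonneg_C:
  assumes "qnb f" "\<And>n. 0 \<le> f n" "e > 0"
  shows "\<exists>C\<ge>0. \<forall>n. f n \<le> C * e ^ n"
proof -
  obtain C where C: "\<And>n. f n \<le> C * e ^ n" using assms unfolding qnb_def by blast
  have "C \<ge> 0" using C[of 0] assms(2)[of 0] by simp
  thus ?thesis using C by blast
qed

lemma qnb_zero:
  assumes q: "qnb g" and g0: "\<And>n. 0 \<le> g n" and L: "L \<ge> 0" and K: "K \<ge> 0"
    and b: "\<And>n. n > 0 \<Longrightarrow> t \<le> K * L ^ n * g n"
  shows "t \<le> 0"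
proof -
  define e where "e = 1 / (2 * (L + 1))"
  have e: "e > 0" using L by (simp add: e_def)
  obtain C where C0: "C \<ge> 0" and C: "\<And>n. g n \<le> C * e ^ n"
    using qnb_nonneg_C[OF q g0 e] by blast
  have Le: "L * e \<le> 1/2" "0 \<le> L * e" using L by (auto simp: e_def field_simps)
  have "\<And>n. n > 0 \<Longrightarrow> t \<le> K * C * (1/2) ^ n"
  proof -
    fix n :: nat assume n: "n > 0"
    have "t \<le> K * L ^ n * g n" using b[OF n] .
    also have "\<dots> \<le> K * L ^ n * (C * e ^ n)" using C[of n] K L by (intro mult_left_mono) auto
    also have "\<dots> = K * C * (L * e) ^ n" by (simp add: power_mult_distrib)
    also have "\<dots> \<le> K * C * (1/2) ^ n" using K C0 Le by (intro mult_left_mono power_mono) auto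
    finally show "t \<le> K * C * (1/2) ^ n" .
  qed
  moreover have "(\<lambda>n. K * C * (1/2::real) ^ n) \<longlonglongrightarrow> 0"
    by (intro tendsto_mult_right_zero LIMSEQ_power_zero) auto
  ultimately show "t \<le> 0"
    by (intro LIMSEQ_le_const[where X = "\<lambda>n. K * C * (1/2::real) ^ n"]) (auto intro: exI[of _ 1])
qed

lemma qnb_le:
  assumes q: "qnb g" and g0: "\<And>n. 0 \<le> g n" and L: "L \<ge> 0" and K: "K \<ge> 0"
    and b: "\<And>n. f n \<le> K * L ^ n * g n"
  shows "qnb f"
  unfolding qnb_def
proof (intro allI impI)
  fix e :: real assume e: "e > 0"
  define e' where "e' = e / (L + 1)"
  have e': "e' > 0" using L e by (simp add: e'_def)
  obtain C where C0: "C \<ge> 0" and C: "\<And>n. g n \<le> C * e' ^ n"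
    using qnb_nonneg_C[OF q g0 e'] by blast
  have Le: "L * e' \<le> e" "0 \<le> L * e'" using L e by (auto simp: e'_def field_simps)
  show "\<exists>C. \<forall>n. f n \<le> C * e ^ n"
  proof (intro exI allI)
    fix n
    have "f n \<le> K * L ^ n * g n" using b .
    also have "\<dots> \<le> K * L ^ n * (C * e' ^ n)" using C[of n] K L by (intro mult_left_mono) auto
    also have "\<dots> = K * C * (L * e') ^ n" by (simp add: power_mult_distrib)
    also have "\<dots> \<le> K * C * e ^ n" using K C0 Le by (intro mult_left_mono power_mono) auto
    finally show "f n \<le> (K * C) * e ^ n" .
  qed
qed

lemma qnb_shift:
  assumes q: "qnb (\<lambda>n. f (Suc n))"
  shows "qnb f"
  unfolding qnb_def
proof (intro allI impI)
  fix e :: real assume e: "e > 0"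
  obtain C where C: "\<And>n. f (Suc n) \<le> C * e ^ n" using q e unfolding qnb_def by blast
  show "\<exists>C. \<forall>n. f n \<le> C * e ^ n"
  proof (intro exI allI)
    fix n
    show "f n \<le> max (f 0) (C / e) * e ^ n"
    proof (cases n)
      case 0 thus ?thesis by simp
    next
      case (Suc m)
      have "f n \<le> C * e ^ m" using C Suc by simp
      also have "\<dots> = C / e * e ^ n" using e Suc by simp
      also have "\<dots> \<le> max (f 0) (C / e) * e ^ n" using e by (intro mult_right_mono) auto
      finally show ?thesis .
    qed
  qed
qed

lemma qnb_add:
  assumes "qnb f" "qnb g" shows "qnb (\<lambda>n. f n + g n)"
  unfolding qnb_def
proof (intro allI impI)
  fix e :: real assume e: "e > 0"
  obtain C where C: "\<And>n. f n \<le> C * e ^ n" using assms e unfolding qnb_def by blast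
  obtain D where D: "\<And>n. g n \<le> D * e ^ n" using assms e unfolding qnb_def by blast
  show "\<exists>C. \<forall>n. f n + g n \<le> C * e ^ n"
    by (rule exI[of _ "C + D"]) (auto simp: distrib_right intro: add_mono C D)
qed

lemma qnb_mono:
  assumes "qnb g" "\<And>n. f n \<le> g n" shows "qnb f"
  using assms unfolding qnb_def by (meson order_trans)

lemma qnb_evenodd:
  assumes "qnb (\<lambda>n. f (2 * n))" "qnb (\<lambda>n. f (Suc (2 * n)))"
  shows "qnb f"
  unfolding qnb_def
proof (intro allI impI)
  fix e :: real assume e: "e > 0"
  have e2: "e ^ 2 > 0" using e by simp
  obtain C where C: "\<And>n. f (2 * n) \<le> C * (e ^ 2) ^ n" using assms(1) e2 unfolding qnb_def by blast
  obtain D where D: "\<And>n. f (Suc (2 * n)) \<le> D * (e ^ 2) ^ n" using assms(2) e2 unfolding qnb_def by blast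
  show "\<exists>C. \<forall>n. f n \<le> C * e ^ n"
  proof (intro exI allI)
    fix n
    show "f n \<le> max C (D / e) * e ^ n"
    proof (cases "even n")
      case True
      then obtain m where m: "n = 2 * m" by blast
      have "f n \<le> C * e ^ n" using C[of m] m by (simp add: power_mult)
      also have "\<dots> \<le> max C (D / e) * e ^ n" using e by (intro mult_right_mono) auto
      finally show ?thesis .
    next
      case False
      then obtain m where m: "n = Suc (2 * m)" by (metis oddE Suc_eq_plus1)
      have "f n \<le> D * e ^ (2 * m)" using D[of m] m by (simp add: power_mult)
      also have "\<dots> = D / e * e ^ n" using e m by simp
      also have "\<dots> \<le> max C (D / e) * e ^ n" using e by (intro mult_right_mono) auto
      finally show ?thesis .
    qed
  qed
qed

lemma qnb_binom:
  assumes f: "qnb f" "\<And>n. 0 \<le> f n" and g: "qnb g" "\<And>n. 0 \<le> g n" and K: "K \<ge> 0"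
    and b: "\<And>n. h n \<le> K * (\<Sum>k\<le>n. real (n choose k) * (f (n - k) * g k))"
  shows "qnb h"
  unfolding qnb_def
proof (intro allI impI)
  fix e :: real assume e: "e > 0"
  have e2: "e / 2 > 0" using e by simp
  obtain C where C0: "C \<ge> 0" and C: "\<And>n. f n \<le> C * (e/2) ^ n"
    using qnb_nonneg_C[OF f e2] by blast
  obtain D where D0: "D \<ge> 0" and D: "\<And>n. g n \<le> D * (e/2) ^ n"
    using qnb_nonneg_C[OF g e2] by blast
  show "\<exists>C. \<forall>n. h n \<le> C * e ^ n"
  proof (intro exI allI)
    fix n
    have "h n \<le> K * (\<Sum>k\<le>n. real (n choose k) * (f (n - k) * g k))" using b .
    also have "\<dots> \<le> K * (\<Sum>k\<le>n. real (n choose k) * ((C * (e/2) ^ (n - k)) * (D * (e/2) ^ k)))"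
    proof (intro mult_left_mono[OF _ K] sum_mono)
      fix k
      have "f (n - k) * g k \<le> (C * (e/2) ^ (n - k)) * (D * (e/2) ^ k)"
        by (rule mult_mono[OF C D]) (use C0 e f(2) g(2) in auto)
      thus "real (n choose k) * (f (n - k) * g k) \<le> real (n choose k) * ((C * (e/2) ^ (n - k)) * (D * (e/2) ^ k))"
        by (intro mult_left_mono) auto
    qed
    also have "\<dots> = K * (\<Sum>k\<le>n. (C * D * (e/2) ^ n) * real (n choose k))"
    proof (intro arg_cong[where f="\<lambda>x. K * x"] sum.cong refl)
      fix k assume "k \<in> {..n}"
      hence "(e/2) ^ (n - k) * (e/2) ^ k = (e/2) ^ n" by (simp add: power_add[symmetric])
      thus "real (n choose k) * ((C * (e/2) ^ (n - k)) * (D * (e/2) ^ k)) = (C * D * (e/2) ^ n) * real (n choose k)"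
        by (simp only: mult_ac)
    qed
    also have "\<dots> = K * (C * D * (e/2) ^ n) * real (\<Sum>k\<le>n. n choose k)"
      by (simp add: sum_distrib_left mult.assoc)
    also have "(\<Sum>k\<le>n. n choose k) = 2 ^ n" by (rule choose_row_sum)
    also have "K * (C * D * (e / 2) ^ n) * real ((2::nat) ^ n) = K * C * D * ((e / 2) * 2) ^ n"
      by (simp only: power_mult_distrib of_nat_power of_nat_numeral mult_ac)
    also have "\<dots> = (K * C * D) * e ^ n" by simp
    finally show "h n \<le> (K * C * D) * e ^ n" .
  qed
qed

lemma comm_pow:
  fixes a b :: "'b::monoid_mult"
  assumes "a * b = b * a" shows "a * b ^ n = b ^ n * a"
proof (induction n)
  case 0 show ?case by simp
next
  case (Suc n)
  have "a * b ^ Suc n = (a * b) * b ^ n" by (simp add: mult.assoc)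
  also have "\<dots> = b * (a * b ^ n)" using assms by (simp add: mult.assoc)
  also have "\<dots> = b ^ Suc n * a" using Suc by (simp add: mult.assoc)
  finally show ?case .
qed

lemma qn_qnb:
  fixes q :: "'b::real_normed_algebra_1"
  shows "quasinilpotent q \<Longrightarrow> qnb (\<lambda>n. norm (q ^ n))"
  unfolding quasinilpotent_def by (rule qnb_of_root) auto

lemma qnb_qn:
  fixes q :: "'b::real_normed_algebra_1"
  shows "qnb (\<lambda>n. norm (q ^ n)) \<Longrightarrow> quasinilpotent q"
  unfolding quasinilpotent_def by (rule root_of_qnb) auto

lemma gd_half:
  fixes x y z :: "'b::real_normed_algebra_1"
  assumes Y: "is_gdrazin x y" and Z: "is_gdrazin x z"
  shows "x * y * (1 - x * z) = 0 \<and> (1 - x * z) * (x * y) = 0"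
proof -
  have xy: "x * y = y * x" and yxy: "y = y * x * y" using Y unfolding is_gdrazin_def by auto
  have xz: "x * z = z * x" and zxz: "z = z * x * z" and qz: "quasinilpotent (x - x * x * z)"
    using Z unfolding is_gdrazin_def by auto
  define f where "f = x * z"
  define q where "q = x - x * x * z"
  have ff: "(1 - f) * (1 - f) = 1 - f"
  proof -
    have "f * f = f" unfolding f_def
      by (metis mult.assoc zxz)
    thus ?thesis by (simp add: algebra_simps)
  qed
  have fx: "(1 - f) * x = x * (1 - f)" unfolding f_def using xz
    by (simp add: algebra_simps) (metis mult.assoc)
  have q1: "q = x * (1 - f)" unfolding q_def f_def by (simp add: algebra_simps)
  have P1: "q ^ Suc n = x ^ Suc n * (1 - f)" for n
  proof (induction n)
    case 0 show ?case using q1 by simp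
  next
    case (Suc n)
    have "q ^ Suc (Suc n) = q ^ Suc n * q" by (rule power_Suc2)
    also have "\<dots> = x ^ Suc n * ((1 - f) * x) * (1 - f)" using Suc q1 by (simp add: mult.assoc)
    also have "\<dots> = x ^ Suc n * x * ((1 - f) * (1 - f))" using fx by (simp add: mult.assoc)
    also have "\<dots> = x ^ Suc (Suc n) * (1 - f)" using ff by (simp only: ff power_Suc2[symmetric])
    finally show ?case .
  qed
  have P2: "q ^ Suc n = (1 - f) * x ^ Suc n" for n
    using P1[of n] comm_pow[OF fx, of "Suc n"] by simp
  have yyx: "y * y * x = y" using xy yxy by (metis mult.assoc)
  have xyy: "x * y * y = y" using xy yxy by (metis mult.assoc)
  have E1: "x * y = y ^ Suc n * x ^ Suc n" for n
  proof (induction n)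
    case 0 show ?case using xy by simp
  next
    case (Suc n)
    have a1: "y ^ Suc (Suc n) = y ^ n * y * y" by (simp only: power_Suc2)
    have a2: "x ^ Suc (Suc n) = x * x ^ Suc n" by (simp only: power_Suc)
    have "y ^ Suc (Suc n) * x ^ Suc (Suc n) = y ^ n * (y * y * x) * x ^ Suc n"
      by (simp only: a1 a2 mult.assoc)
    also have "\<dots> = y ^ Suc n * x ^ Suc n" using yyx by (simp add: mult.assoc power_commutes)
    finally show ?case using Suc by simp
  qed
  have E2: "x * y = x ^ Suc n * y ^ Suc n" for n
  proof (induction n)
    case 0 show ?case by simp
  next
    case (Suc n)
    have a1: "y ^ Suc (Suc n) = y * y * y ^ n" by (simp only: power_Suc mult.assoc)
    have a2: "x ^ Suc (Suc n) = x ^ Suc n * x" by (simp only: power_Suc2)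
    have "x ^ Suc (Suc n) * y ^ Suc (Suc n) = x ^ Suc n * (x * y * y) * y ^ n"
      by (simp only: a1 a2 mult.assoc)
    also have "\<dots> = x ^ Suc n * y ^ Suc n" using xyy by (simp add: mult.assoc)
    finally show ?case using Suc by simp
  qed
  have g0: "\<And>n. 0 \<le> norm (q ^ n)" by simp
  have qq: "qnb (\<lambda>n. norm (q ^ n))" using qz unfolding q_def by (rule qn_qnb)
  have "norm (x * y * (1 - f)) \<le> 0"
  proof (rule qnb_zero[OF qq g0 norm_ge_zero, of 1])
    fix n :: nat assume "n > 0"
    then obtain m where m: "n = Suc m" by (cases n) auto
    have "x * y * (1 - f) = y ^ n * q ^ n" using E1[of m] P1[of m] m by (simp add: mult.assoc)
    also have "norm \<dots> \<le> norm (y ^ n) * norm (q ^ n)" by (rule norm_mult_ineq)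
    also have "\<dots> \<le> norm y ^ n * norm (q ^ n)" by (intro mult_right_mono norm_power_ineq) auto
    finally show "norm (x * y * (1 - f)) \<le> 1 * norm y ^ n * norm (q ^ n)" by simp
  qed simp
  moreover have "norm ((1 - f) * (x * y)) \<le> 0"
  proof (rule qnb_zero[OF qq g0 norm_ge_zero, of 1])
    fix n :: nat assume "n > 0"
    then obtain m where m: "n = Suc m" by (cases n) auto
    have "(1 - f) * (x * y) = q ^ n * y ^ n" using E2[of m] P2[of m] m by (simp add: mult.assoc)
    also have "norm \<dots> \<le> norm (q ^ n) * norm (y ^ n)" by (rule norm_mult_ineq)
    also have "\<dots> \<le> norm (q ^ n) * norm y ^ n" by (intro mult_left_mono norm_power_ineq) auto
    finally show "norm ((1 - f) * (x * y)) \<le> 1 * norm y ^ n * norm (q ^ n)" by (simp add: mult_ac)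
  qed simp
  ultimately show ?thesis unfolding f_def by simp
qed

lemma gd_unique:
  fixes x y z :: "'b::real_normed_algebra_1"
  assumes Y: "is_gdrazin x y" and Z: "is_gdrazin x z"
  shows "y = z"
proof -
  have h1: "x * y * (1 - x * z) = 0" "(1 - x * z) * (x * y) = 0" using gd_half[OF Y Z] by auto
  have h2: "x * z * (1 - x * y) = 0" "(1 - x * y) * (x * z) = 0" using gd_half[OF Z Y] by auto
  have e1: "x * y = x * z * (x * y)" using h1(2) by (simp add: left_diff_distrib)
  have e2: "x * z = x * z * (x * y)" using h2(1) by (simp add: right_diff_distrib)
  have ef: "x * y = x * z" using e1 e2 by simp
  have xy: "x * y = y * x" and yxy: "y = y * x * y" using Y unfolding is_gdrazin_def by auto
  have xz: "x * z = z * x" and zxz: "z = z * x * z" using Z unfolding is_gdrazin_def by auto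
  have "y = y * (x * y)" using yxy by (simp add: mult.assoc)
  also have "\<dots> = y * (x * z)" using ef by simp
  also have "\<dots> = (y * x) * z" by (simp add: mult.assoc)
  also have "\<dots> = (x * z) * z" using xy ef by simp
  also have "\<dots> = z" using xz zxz by (simp add: mult.assoc)
  finally show ?thesis .
qed

lemma gd_eq:
  fixes x y :: "'b::real_normed_algebra_1"
  assumes "is_gdrazin x y" shows "gd x = y"
  unfolding gd_def using assms gd_unique by blast

lemma gd_set_is:
  fixes x :: "'b::real_normed_algebra_1"
  assumes "x \<in> gd_set" shows "is_gdrazin x (gd x)"
proof -
  obtain y where "is_gdrazin x y" using assms unfolding gd_set_def by blast
  thus ?thesis using gd_eq by metis
qed

lemma qpow_aux:
  fixes q p x :: "'b::monoid_mult"
  assumes qp: "q * p = p * x" and px: "p * x = x * p"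
  shows "q ^ n * p = x ^ n * p"
proof (induction n)
  case 0 show ?case by simp
next
  case (Suc n)
  have "q ^ Suc n * p = q ^ n * (q * p)" by (simp only: power_Suc2 mult.assoc)
  also have "\<dots> = q ^ n * p * x" by (simp only: qp mult.assoc)
  also have "\<dots> = x ^ n * (p * x)" using Suc by (simp only: mult.assoc)
  also have "\<dots> = x ^ Suc n * p" by (simp only: px mult.assoc power_Suc2)
  finally show ?case .
qed

context
  fixes x y :: "'b::real_normed_algebra_1"
  assumes G: "is_gdrazin x y"
begin

lemma gz_comm: "x * y = y * x" using G unfolding is_gdrazin_def by auto
lemma gz_yxy: "y * (x * y) = y" using G unfolding is_gdrazin_def by (auto simp: mult.assoc)
lemma gz_yxy': "y * (x * (y * z)) = y * z" using gz_yxy by (metis mult.assoc)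
lemma gz_qn: "quasinilpotent (x - x * x * y)" using G unfolding is_gdrazin_def by auto
lemma gz_xyy: "x * (y * y) = y" using gz_yxy gz_comm by (metis mult.assoc)
lemma gz_xyy': "x * (y * (y * z)) = y * z" using gz_xyy by (metis mult.assoc)
lemma gz_yyx: "y * (y * x) = y" using gz_yxy gz_comm by (metis mult.assoc)
lemma gz_yyx': "y * (y * (x * z)) = y * z" using gz_yyx by (metis mult.assoc)
lemma gz_comm': "x * (y * z) = y * (x * z)" using gz_comm by (metis mult.assoc)
lemma gz_xyxy: "x * (y * (x * y)) = x * y" using gz_yxy by simp
lemma gz_xyxy': "x * (y * (x * (y * z))) = x * (y * z)" using gz_yxy' by simp
lemma gz_xxyy: "x * (x * (y * y)) = x * y" using gz_xyy by simp
lemma gz_xxyy': "x * (x * (y * (y * z))) = x * (y * z)" using gz_xyy' by simp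

lemma gz_pi_comm: "(1 - x * y) * x = x * (1 - x * y)"
  by (simp add: algebra_simps gz_comm[symmetric])
lemma gz_pi_idem: "(1 - x * y) * (1 - x * y) = 1 - x * y"
  by (simp add: algebra_simps gz_xyxy)
lemma gz_q: "x - x * x * y = x * (1 - x * y)" by (simp add: algebra_simps)
lemma gz_q': "x - x * x * y = (1 - x * y) * x" using gz_q gz_pi_comm by simp

lemma gz_pow1: "y = x ^ n * y ^ Suc n"
proof (induction n)
  case 0 show ?case by simp
next
  case (Suc n)
  have f1: "x ^ Suc n = x ^ n * x" by (rule power_Suc2)
  have f2: "y ^ Suc (Suc n) = y * (y * y ^ n)" by simp
  have "x ^ Suc n * y ^ Suc (Suc n) = x ^ n * (x * (y * y)) * y ^ n"
    by (simp only: f1 f2 mult.assoc)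
  also have "\<dots> = x ^ n * y ^ Suc n" using gz_xyy by (simp add: mult.assoc)
  finally show ?case using Suc by simp
qed

lemma gz_pow2: "y = y ^ Suc n * x ^ n"
proof (induction n)
  case 0 show ?case by simp
next
  case (Suc n)
  have f1: "x ^ Suc n = x * x ^ n" by (rule power_Suc)
  have f2: "y ^ Suc (Suc n) = y ^ n * y * y" by (simp only: power_Suc2)
  have "y ^ Suc (Suc n) * x ^ Suc n = y ^ n * (y * (y * x)) * x ^ n"
    by (simp only: f1 f2 mult.assoc)
  also have "\<dots> = y ^ n * y * x ^ n" using gz_yyx by (simp add: mult.assoc)
  also have "\<dots> = y ^ Suc n * x ^ n" by (simp only: power_Suc2)
  finally show ?case using Suc by simp
qed

lemma gz_qpow: "(x - x * x * y) ^ n * (1 - x * y) = x ^ n * (1 - x * y)"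
proof -
  have qp: "(x - x * x * y) * (1 - x * y) = (1 - x * y) * x"
  proof -
    have "(x - x * x * y) * (1 - x * y) = (1 - x * y) * (x * (1 - x * y))" by (subst gz_q') (simp only: mult.assoc)
    also have "\<dots> = (1 - x * y) * (1 - x * y) * x" by (simp only: gz_pi_comm mult.assoc)
    finally show ?thesis by (simp only: gz_pi_idem)
  qed
  show ?thesis using qpow_aux[OF qp gz_pi_comm] .
qed

end

lemma cline:
  fixes b c y :: "'b::real_normed_algebra_1"
  assumes G: "is_gdrazin (b * c) y"
  shows "is_gdrazin (c * b) (c * y * y * b)"
proof -
  note g = gz_xyy'[OF G] gz_yyx'[OF G] gz_yxy'[OF G] gz_xxyy'[OF G] gz_xyy[OF G] gz_yyx[OF G]
  have c1: "c * b * (c * y * y * b) = c * y * b"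
    using g(1)[of b] by (simp add: mult.assoc)
  have c2: "c * y * y * b * (c * b) = c * y * b"
    using g(2)[of b] by (simp add: mult.assoc)
  have c3: "c * y * y * b * (c * b) * (c * y * y * b) = c * y * y * b"
  proof -
    have "c * y * y * b * (c * b) * (c * y * y * b) = c * (y * (y * (b * c * (b * c * (y * (y * b))))))"
      by (simp add: mult.assoc)
    also have "\<dots> = c * (y * (b * c * (y * (y * b))))" using g(2) by (simp add: mult.assoc)
    also have "\<dots> = c * (y * (y * b))" using g(3) by simp
    finally show ?thesis by (simp add: mult.assoc)
  qed
  define S where "S = 1 - b * c * y"
  define qX where "qX = b * c - b * c * (b * c) * y"
  have qXS: "qX * S = qX" unfolding qX_def S_def
    using gz_qpow[OF G, of 1] gz_q[OF G] by simp
  have SXS: "S * (b * c) * S = qX" unfolding qX_def S_def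
    using gz_pi_comm[OF G] gz_pi_idem[OF G] gz_q[OF G] by (metis mult.assoc)
  have c4: "c * b - c * b * (c * b) * (c * y * y * b) = c * S * b"
  proof -
    have "c * b * (c * b) * (c * y * y * b) = c * (b * c * (b * c * (y * (y * b))))"
      by (simp add: mult.assoc)
    also have "\<dots> = c * (b * c * (y * b))" using g(4)[of b] by simp
    finally show ?thesis unfolding S_def by (simp add: algebra_simps)
  qed
  have pw: "(c * S * b) ^ Suc n = c * qX ^ n * S * b" for n
  proof (induction n)
    case 0 show ?case by simp
  next
    case (Suc n)
    have "(c * S * b) ^ Suc (Suc n) = c * qX ^ n * (S * (b * c) * S) * b"
      using Suc by (simp only: power_Suc2 mult.assoc)
    also have "\<dots> = c * qX ^ n * (qX * S) * b" using SXS qXS by simp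
    also have "\<dots> = c * qX ^ Suc n * S * b" by (simp only: power_Suc2 mult.assoc)
    finally show ?case .
  qed
  have qq: "qnb (\<lambda>n. norm (qX ^ n))" unfolding qX_def by (rule qn_qnb[OF gz_qn[OF G]])
  have "qnb (\<lambda>n. norm ((c * S * b) ^ n))"
  proof (rule qnb_shift, rule qnb_le[OF qq norm_ge_zero, of 1 "norm c * norm (S * b)"])
    fix n
    have "norm ((c * S * b) ^ Suc n) = norm (c * qX ^ n * (S * b))" using pw[of n] by (simp add: mult.assoc)
    also have "\<dots> \<le> norm (c * qX ^ n) * norm (S * b)" by (rule norm_mult_ineq)
    also have "\<dots> \<le> norm c * norm (qX ^ n) * norm (S * b)"
      by (intro mult_right_mono norm_mult_ineq) auto
    finally show "norm ((c * S * b) ^ Suc n) \<le> norm c * norm (S * b) * 1 ^ n * norm (qX ^ n)"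
      by (simp add: mult_ac)
  qed auto
  hence "quasinilpotent (c * S * b)" by (rule qnb_qn)
  thus ?thesis unfolding is_gdrazin_def using c1 c2 c3 c4 by simp
qed

lemma gz_piy: "is_gdrazin x y \<Longrightarrow> (1 - x * y) * y = 0"
  by (simp add: algebra_simps gz_xyy)
lemma gz_ypi: "is_gdrazin x y \<Longrightarrow> y * (1 - x * y) = 0"
  by (simp add: algebra_simps gz_yxy)

lemma scaleC_zero_right [simp]: "scaleC a (0::'a::cbanach_algebra) = 0"
  by (metis mult_zero_left scaleC_right_mult)

lemma scaleC_inv: "a \<noteq> 0 \<Longrightarrow> scaleC (inverse a) (scaleC a (x::'a::cbanach_algebra)) = x"
  by (simp add: scaleC_scaleC scaleC_one)

locale setup1 =
  fixes A B C D :: "'a::cbanach_algebra" and lam :: complex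
  assumes lam: "lam \<noteq> 0" and gA: "A \<in> gd_set" and gX: "B * C \<in> gd_set"
    and H1: "A * B = scaleC lam (gpi A * B * D * gpi (C * B))"
begin

lemma iA: "is_gdrazin A (gd A)" using gA by (rule gd_set_is)
lemma iX: "is_gdrazin (B * C) (gd (B * C))" using gX by (rule gd_set_is)
lemma gdY: "gd (C * B) = C * gd (B * C) * gd (B * C) * B"
  using cline[OF iX] by (rule gd_eq)
lemma iY: "is_gdrazin (C * B) (gd (C * B))"
  using cline[OF iX] gdY by simp
lemma gY: "C * B \<in> gd_set" using iY unfolding gd_set_def by blast

lemma AdB: "gd A * B = 0"
proof -
  have "gd A * (A * B) = scaleC lam (gd A * gpi A * (B * D * gpi (C * B)))"
    by (subst H1) (simp add: scaleC_right_mult mult.assoc)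
  also have "gd A * gpi A = 0" unfolding gpi_def by (rule gz_ypi[OF iA])
  finally have "gd A * (A * B) = 0" by (simp add: scaleC_right_mult[symmetric])
  hence "gd A * (gd A * (A * B)) = 0" by simp
  thus ?thesis using gz_yyx'[OF iA] by simp
qed

lemma piAB: "gpi A * B = B"
  unfolding gpi_def by (simp add: algebra_simps AdB)

lemma H1': "A * B = scaleC lam (B * D * gpi (C * B))"
  using H1 piAB by simp

lemma Sb: "gpi (B * C) * B = B * gpi (C * B)"
  unfolding gpi_def gdY using gz_xxyy'[OF iX, of B]
  by (simp add: algebra_simps)

lemma Rc: "gpi (C * B) * C = C * gpi (B * C)"
  unfolding gpi_def gdY using gz_xyy'[OF iX, of "B * C"] gz_comm[OF iX]
  by (simp add: algebra_simps)

lemma BYd: "B * gd (C * B) = gd (B * C) * B"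
  unfolding gdY using gz_xyy'[OF iX, of B] by (simp add: mult.assoc)

lemma YdC: "gd (C * B) * C = C * gd (B * C)"
  unfolding gdY using gz_yyx[OF iX] by (simp add: mult.assoc)

lemma F1: "A * B * gd (C * B) = 0"
proof -
  have "A * B * gd (C * B) = scaleC lam (B * D * (gpi (C * B) * gd (C * B)))"
    by (subst H1') (simp add: scaleC_left_mult mult.assoc)
  also have "gpi (C * B) * gd (C * B) = 0" unfolding gpi_def by (rule gz_piy[OF iY])
  finally show ?thesis by simp
qed

end

locale setup2 = s1: setup1 A B C D lam + s2: setup1 D C B A lam
  for A B C D :: "'a::cbanach_algebra" and lam :: complex
begin

lemma DY: "D * (C * B) = scaleC (lam * lam) (C * B * D * gpi (C * B))"
proof -
  have "D * (C * B) = (D * C) * B" by (simp add: mult.assoc)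
  also have "\<dots> = scaleC lam (C * A * (gpi (B * C) * B))"
    by (subst s2.H1') (simp add: scaleC_left_mult mult.assoc)
  also have "gpi (B * C) * B = B * gpi (C * B)" by (rule s1.Sb)
  also have "C * A * (B * gpi (C * B)) = C * (A * B) * gpi (C * B)" by (simp add: mult.assoc)
  also have "\<dots> = scaleC lam (C * B * D * (gpi (C * B) * gpi (C * B)))"
    by (subst s1.H1') (simp add: scaleC_left_mult scaleC_right_mult mult.assoc)
  also have "gpi (C * B) * gpi (C * B) = gpi (C * B)" unfolding gpi_def by (rule gz_pi_idem[OF s1.iY])
  finally show ?thesis by (simp add: scaleC_scaleC)
qed

lemma DYYd: "D * (C * B) * gd (C * B) = 0"
proof -
  have "D * (C * B) * gd (C * B) = scaleC (lam * lam) (C * B * D * (gpi (C * B) * gd (C * B)))"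
    by (subst DY) (simp add: scaleC_left_mult mult.assoc)
  also have "gpi (C * B) * gd (C * B) = 0" unfolding gpi_def by (rule gz_piy[OF s1.iY])
  finally show ?thesis by simp
qed

lemma BDR: "B * D * gpi (C * B) = B * D"
proof -
  have "B * D * gpi (C * B) = B * D - B * (D * (C * B) * gd (C * B))"
    unfolding gpi_def by (simp add: algebra_simps)
  thus ?thesis using DYYd by simp
qed

lemma AB: "A * B = scaleC lam (B * D)"
  using s1.H1' BDR by simp

end

sublocale setup2 \<subseteq> sw: setup2 D C B A lam
  by unfold_locales

context setup2
begin

lemma BD: "B * D = scaleC (inverse lam) (A * B)"
proof -
  have "scaleC (inverse lam) (A * B) = B * D" unfolding AB by (rule scaleC_inv[OF s1.lam])
  thus ?thesis by simp
qed

lemma CA: "C * A = scaleC (inverse lam) (D * C)"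
proof -
  have "scaleC (inverse lam) (D * C) = C * A" unfolding sw.AB by (rule scaleC_inv[OF s1.lam])
  thus ?thesis by simp
qed

lemma CApow: "C * A ^ n = scaleC (inverse lam ^ n) (D ^ n * C)"
proof (induction n)
  case 0 show ?case by (simp add: scaleC_one)
next
  case (Suc n)
  have "C * A ^ Suc n = C * A ^ n * A" by (simp only: mult.assoc power_Suc2)
  also have "\<dots> = scaleC (inverse lam ^ n) (D ^ n * (C * A))"
    using Suc by (simp add: scaleC_left_mult mult.assoc)
  also have "\<dots> = scaleC (inverse lam ^ n * inverse lam) (D ^ n * D * C)"
    unfolding CA by (simp add: scaleC_right_mult scaleC_scaleC mult.assoc)
  also have "\<dots> = scaleC (inverse lam ^ Suc n) (D ^ Suc n * C)"
    by (simp only: power_Suc2)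
  finally show ?case .
qed

lemma qDpow: "D ^ n * C = (D - D * D * gd D) ^ n * C"
proof -
  have "D ^ n * C = D ^ n * (gpi D * C)" using s2.piAB by simp
  also have "\<dots> = (D - D * D * gd D) ^ n * (gpi D * C)"
    using gz_qpow[OF s2.iA, of n] unfolding gpi_def by (simp add: mult.assoc[symmetric])
  finally show ?thesis using s2.piAB by simp
qed

lemma F3: "C * gd A = 0"
proof -
  define qD where "qD = D - D * D * gd D"
  have qq: "qnb (\<lambda>n. norm (qD ^ n))" unfolding qD_def by (rule qn_qnb[OF gz_qn[OF s2.iA]])
  have "norm (C * gd A) \<le> 0"
  proof (rule qnb_zero[OF qq norm_ge_zero, of "cmod (inverse lam) * norm (gd A)" "norm C * norm (gd A)"])
    fix n :: nat
    have "C * gd A = C * A ^ n * gd A ^ Suc n" using gz_pow1[OF s1.iA, of n] by (simp add: mult.assoc)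
    also have "\<dots> = scaleC (inverse lam ^ n) (qD ^ n * C * gd A ^ Suc n)"
      unfolding CApow qDpow qD_def by (simp add: scaleC_left_mult)
    finally have e: "norm (C * gd A) = cmod (inverse lam) ^ n * norm (qD ^ n * C * gd A ^ Suc n)"
      by (simp add: norm_scaleC norm_power)
    have "norm (qD ^ n * C * gd A ^ Suc n) \<le> norm (qD ^ n) * norm C * norm (gd A) ^ Suc n"
      by (meson mult_mono norm_ge_zero norm_mult_ineq norm_power_ineq order_trans zero_le_mult_iff)
    hence "norm (C * gd A) \<le> cmod (inverse lam) ^ n * (norm (qD ^ n) * norm C * norm (gd A) ^ Suc n)"
      unfolding e by (intro mult_left_mono) auto
    thus "norm (C * gd A) \<le> norm C * norm (gd A) * (cmod (inverse lam) * norm (gd A)) ^ n * norm (qD ^ n)"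
      by (simp add: power_mult_distrib mult_ac)
  qed auto
  thus ?thesis by simp
qed

lemma XA: "B * C * A = scaleC (inverse lam * inverse lam) (A * (B * C))"
proof -
  have "B * C * A = B * (C * A)" by (simp add: mult.assoc)
  also have "\<dots> = scaleC (inverse lam) (B * D * C)"
    unfolding CA by (simp add: scaleC_right_mult mult.assoc)
  also have "\<dots> = scaleC (inverse lam * inverse lam) (A * (B * C))"
    unfolding BD by (simp add: scaleC_left_mult scaleC_scaleC mult.assoc)
  finally show ?thesis .
qed

lemma XApow: "(B * C) ^ n * A = scaleC ((inverse lam * inverse lam) ^ n) (A * (B * C) ^ n)"
proof (induction n)
  case 0 show ?case by (simp add: scaleC_one)
next
  case (Suc n)
  have "(B * C) ^ Suc n * A = B * C * ((B * C) ^ n * A)" by (simp only: power_Suc mult.assoc)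
  also have "\<dots> = scaleC ((inverse lam * inverse lam) ^ n) (B * C * A * (B * C) ^ n)"
    unfolding Suc by (simp add: scaleC_right_mult mult.assoc)
  also have "\<dots> = scaleC ((inverse lam * inverse lam) ^ n * (inverse lam * inverse lam)) (A * (B * C) * (B * C) ^ n)"
    unfolding XA by (simp add: scaleC_left_mult scaleC_scaleC)
  also have "\<dots> = scaleC ((inverse lam * inverse lam) ^ Suc n) (A * (B * C) ^ Suc n)"
    by (simp only: power_Suc2[of "inverse lam * inverse lam"] power_Suc[of "B * C"] mult.assoc)
  finally show ?case .
qed

lemma AXXd: "A * (B * C) * gd (B * C) = 0"
  using sw.DYYd .

lemma AXpow: "A * (B * C) ^ n = A * ((B * C - B * C * (B * C) * gd (B * C)) ^ n * gpi (B * C))"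
proof -
  have cm: "B * C * gd (B * C) * (B * C) = B * C * (B * C * gd (B * C))"
  proof -
    have e: "gd (B * C) * (B * C) = B * C * gd (B * C)" using gz_comm[OF s1.iX] by simp
    have "B * C * gd (B * C) * (B * C) = B * C * (gd (B * C) * (B * C))" by (rule mult.assoc)
    thus ?thesis using e by simp
  qed
  have "A * (B * C) ^ n * (B * C * gd (B * C)) = A * (B * C * gd (B * C) * (B * C) ^ n)"
    using comm_pow[OF cm, of n] by (simp add: mult.assoc)
  also have "\<dots> = (A * (B * C) * gd (B * C)) * (B * C) ^ n" by (simp only: mult.assoc)
  also have "\<dots> = 0" using AXXd by simp
  finally have z: "A * (B * C) ^ n * (B * C * gd (B * C)) = 0" .
  have "A * (B * C) ^ n = A * (B * C) ^ n * gpi (B * C)"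
    using z unfolding gpi_def by (simp add: right_diff_distrib)
  also have "\<dots> = A * ((B * C) ^ n * gpi (B * C))" by (simp add: mult.assoc)
  also have "(B * C) ^ n * gpi (B * C) = (B * C - B * C * (B * C) * gd (B * C)) ^ n * gpi (B * C)"
    unfolding gpi_def by (rule gz_qpow[OF s1.iX, symmetric])
  finally show ?thesis .
qed

lemma F4: "gd (B * C) * A = 0"
proof -
  define qX where "qX = B * C - B * C * (B * C) * gd (B * C)"
  define Xd where "Xd = gd (B * C)"
  define m where "m = inverse lam * inverse lam"
  have qq: "qnb (\<lambda>n. norm (qX ^ n))" unfolding qX_def by (rule qn_qnb[OF gz_qn[OF s1.iX]])
  have "norm (Xd * A) \<le> 0"
  proof (rule qnb_zero[OF qq norm_ge_zero, of "cmod m * norm Xd" "norm Xd * norm A * norm (gpi (B * C))"])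
    fix n :: nat
    have h: "Xd = Xd ^ Suc n * (B * C) ^ n" unfolding Xd_def by (rule gz_pow2[OF s1.iX])
    have "Xd * A = (Xd ^ Suc n * (B * C) ^ n) * A" using h by (rule arg_cong[where f="\<lambda>z. z * A"])
    hence "Xd * A = Xd ^ Suc n * ((B * C) ^ n * A)" by (simp only: mult.assoc)
    also have "\<dots> = scaleC (m ^ n) (Xd ^ Suc n * A * qX ^ n * gpi (B * C))"
      unfolding XApow AXpow qX_def m_def by (simp add: scaleC_right_mult mult.assoc)
    finally have e: "norm (Xd * A) = cmod m ^ n * norm (Xd ^ Suc n * A * qX ^ n * gpi (B * C))"
      by (simp add: norm_scaleC norm_power)
    have "norm (Xd ^ Suc n * A * qX ^ n * gpi (B * C)) \<le> norm (Xd ^ Suc n * A * qX ^ n) * norm (gpi (B * C))"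
      by (rule norm_mult_ineq)
    also have "norm (Xd ^ Suc n * A * qX ^ n) \<le> norm (Xd ^ Suc n * A) * norm (qX ^ n)"
      by (rule norm_mult_ineq)
    also have "norm (Xd ^ Suc n * A) \<le> norm (Xd ^ Suc n) * norm A"
      by (rule norm_mult_ineq)
    also have "norm (Xd ^ Suc n) \<le> norm Xd ^ Suc n"
      by (rule norm_power_ineq)
    finally have "norm (Xd ^ Suc n * A * qX ^ n * gpi (B * C)) \<le> norm Xd ^ Suc n * norm A * norm (qX ^ n) * norm (gpi (B * C))"
      by (simp add: mult_right_mono)
    hence "norm (Xd * A) \<le> cmod m ^ n * (norm Xd ^ Suc n * norm A * norm (qX ^ n) * norm (gpi (B * C)))"
      unfolding e by (intro mult_left_mono) auto
    thus "norm (Xd * A) \<le> norm Xd * norm A * norm (gpi (B * C)) * (cmod m * norm Xd) ^ n * norm (qX ^ n)"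
      by (simp add: power_mult_distrib mult_ac)
  qed auto
  thus ?thesis unfolding Xd_def by simp
qed

lemma AXd: "A * gd (B * C) = 0"
proof -
  have "A * gd (B * C) = A * (B * C) * gd (B * C) * gd (B * C)"
    using gz_xyy[OF s1.iX] by (simp add: mult.assoc)
  thus ?thesis using AXXd by simp
qed

end

section \<open>2x2 matrices\<close>

lemma forall_2: "(\<forall>i::2. P i) \<longleftrightarrow> P 1 \<and> P 2"
  using exhaust_2 by metis

lemma two_neq_one [simp]: "(2::2) \<noteq> 1"
  by simp

lemma mat2_nth [simp]:
  "mat2 a b c d $ 1 $ 1 = a" "mat2 a b c d $ 1 $ 2 = b"
  "mat2 a b c d $ 2 $ 1 = c" "mat2 a b c d $ 2 $ 2 = d"
  by (simp_all add: mat2_def)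

lemma mat2_ext: "(X::'b::zero^2^2) = Y \<longleftrightarrow> X$1$1 = Y$1$1 \<and> X$1$2 = Y$1$2 \<and> X$2$1 = Y$2$1 \<and> X$2$2 = Y$2$2"
  by (auto simp: vec_eq_iff forall_2)

lemma mat2_decomp: "(X::'b::zero^2^2) = mat2 (X$1$1) (X$1$2) (X$2$1) (X$2$2)"
  by (simp add: mat2_ext)

lemma mat2_eq_iff: "mat2 a b c d = mat2 a' b' c' d' \<longleftrightarrow> a = a' \<and> b = b' \<and> c = c' \<and> d = d'"
  by (simp add: mat2_ext)

lemma mat2_mult: "mat2 a b c d ** mat2 e f g h = mat2 (a*e + b*g) (a*f + b*h) (c*e + d*g) (c*f + d*h)"
  by (simp add: mat2_ext matrix_matrix_mult_def sum_2)

lemma mat2_add: "mat2 a b c d + mat2 e f g h = mat2 (a + e) (b + f) (c + g) (d + h)"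
  by (simp add: mat2_ext)

lemma mat2_diff: "mat2 a b c d - mat2 e f g h = mat2 (a - e) (b - f) (c - g) (d - h)"
  by (simp add: mat2_ext)

lemma mat2_one: "(mat 1 :: 'b::{zero,one}^2^2) = mat2 1 0 0 1"
  by (simp add: mat2_ext mat_def)

lemma mat2_zero: "(0 :: 'b::zero^2^2) = mat2 0 0 0 0"
  by (simp add: mat2_ext)

definition mnorm :: "'b::real_normed_vector^2^2 \<Rightarrow> real" where
  "mnorm X = norm (X$1$1) + norm (X$1$2) + norm (X$2$1) + norm (X$2$2)"

lemma mnorm_mat2: "mnorm (mat2 a b c d) = norm a + norm b + norm c + norm d"
  by (simp add: mnorm_def)

lemma mnorm_nonneg: "0 \<le> mnorm X" by (simp add: mnorm_def)

lemma norm_vec2_le: "norm (x::'b::real_normed_vector^2) \<le> norm (x$1) + norm (x$2)"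
proof -
  have "norm x \<le> (\<Sum>i\<in>UNIV. norm (x$i))" unfolding norm_vec_def by (rule L2_set_le_sum) auto
  thus ?thesis by (simp add: sum_2)
qed

lemma norm_le_mnorm: "norm X \<le> mnorm X"
proof -
  have "norm X \<le> norm (X$1) + norm (X$2)" by (rule norm_vec2_le)
  also have "\<dots> \<le> (norm (X$1$1) + norm (X$1$2)) + (norm (X$2$1) + norm (X$2$2))"
    by (intro add_mono norm_vec2_le)
  finally show ?thesis by (simp add: mnorm_def add.assoc)
qed

lemma norm_nth_le2: "norm ((x::'b::real_normed_vector^'n) $ i) \<le> norm x"
  unfolding norm_vec_def by (rule member_le_L2_set) simp_all

lemma mnorm_le_norm: "mnorm X \<le> 4 * norm X"
proof -
  have "\<And>i j. norm (X$i$j) \<le> norm X"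
  proof -
    fix i j
    show "norm (X$i$j) \<le> norm X" using norm_nth_le2[of "X$i" j] norm_nth_le2[of X i] by linarith
  qed
  thus ?thesis unfolding mnorm_def by (smt (verit))
qed

lemma mnorm_zero_iff: "mnorm X \<le> 0 \<Longrightarrow> X = 0"
proof -
  assume "mnorm X \<le> 0"
  hence "norm X \<le> 0" using norm_le_mnorm[of X] by linarith
  thus "X = 0" by simp
qed

lemma mnorm_mult:
  fixes X Y :: "'b::real_normed_algebra_1^2^2"
  shows "mnorm (X ** Y) \<le> mnorm X * mnorm Y"
proof -
  obtain a b c d where X: "X = mat2 a b c d" by (rule that[of "X$1$1" "X$1$2" "X$2$1" "X$2$2"]) (rule mat2_decomp)
  obtain e f g h where Y: "Y = mat2 e f g h" by (rule that[of "Y$1$1" "Y$1$2" "Y$2$1" "Y$2$2"]) (rule mat2_decomp)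
  have t: "\<And>p q r s :: 'b. norm (p * q + r * s) \<le> norm p * norm q + norm r * norm s"
    by (meson add_mono norm_mult_ineq norm_triangle_ineq order_trans)
  have "mnorm (X ** Y) \<le> (norm a * norm e + norm b * norm g) + (norm a * norm f + norm b * norm h)
      + (norm c * norm e + norm d * norm g) + (norm c * norm f + norm d * norm h)"
    unfolding X Y mat2_mult mnorm_mat2 by (intro add_mono t)
  also have "\<dots> \<le> mnorm X * mnorm Y"
    unfolding X Y mnorm_mat2
    by (simp add: algebra_simps add_increasing2 add_increasing)
  finally show ?thesis .
qed

lemma mpow_Suc2: "mpow X (Suc n) = mpow X n ** X"
proof (induction n)
  case 0 show ?case by simp
next
  case (Suc n)
  have "mpow X (Suc (Suc n)) = X ** (mpow X n ** X)" using Suc by simp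
  also have "\<dots> = mpow X (Suc n) ** X" by (simp add: matrix_mul_assoc)
  finally show ?case .
qed

lemma mpow_comm:
  assumes "A ** B = B ** A" shows "A ** mpow B n = mpow B n ** A"
proof (induction n)
  case 0 show ?case by simp
next
  case (Suc n)
  have "A ** mpow B (Suc n) = (A ** B) ** mpow B n" by (simp add: matrix_mul_assoc)
  also have "\<dots> = B ** (A ** mpow B n)" using assms by (simp add: matrix_mul_assoc)
  also have "\<dots> = mpow B (Suc n) ** A" using Suc by (simp add: matrix_mul_assoc)
  finally show ?case .
qed

lemma mnorm_mpow:
  fixes X :: "'b::real_normed_algebra_1^2^2"
  shows "mnorm (mpow X (Suc n)) \<le> mnorm X ^ Suc n"
proof (induction n)
  case 0 show ?case by simp
next
  case (Suc n)
  have "mnorm (mpow X (Suc (Suc n))) \<le> mnorm X * mnorm (mpow X (Suc n))"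
    by (simp only: mpow.simps(2)) (rule mnorm_mult)
  also have "\<dots> \<le> mnorm X * mnorm X ^ Suc n" using Suc by (intro mult_left_mono mnorm_nonneg)
  finally show ?case by simp
qed

lemma mqn_qnb:
  fixes q :: "'b::real_normed_algebra_1^2^2"
  assumes "mquasinilpotent q" shows "qnb (\<lambda>n. mnorm (mpow q n))"
proof -
  have "qnb (\<lambda>n. norm (mpow q n))" using assms unfolding mquasinilpotent_def
    by (intro qnb_of_root) auto
  thus ?thesis by (rule qnb_le[where L=1 and K=4]) (auto simp: mnorm_le_norm)
qed

lemma qnb_mqn:
  fixes q :: "'b::real_normed_algebra_1^2^2"
  assumes "qnb (\<lambda>n. mnorm (mpow q n))" shows "mquasinilpotent q"
proof -
  have "qnb (\<lambda>n. norm (mpow q n))" using assms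
    by (rule qnb_mono) (rule norm_le_mnorm)
  thus ?thesis unfolding mquasinilpotent_def by (intro root_of_qnb) auto
qed

lemma mm_diff_l: "(A::'b::ring_1^2^2) ** (B - C) = A ** B - A ** C"
  by (simp add: vec_eq_iff matrix_matrix_mult_def sum_subtractf right_diff_distrib left_diff_distrib)

lemma mm_diff_r: "((A::'b::ring_1^2^2) - B) ** C = A ** C - B ** C"
  by (simp add: vec_eq_iff matrix_matrix_mult_def sum_subtractf right_diff_distrib left_diff_distrib)

lemma mgd_half:
  fixes X Y Z :: "'b::real_normed_algebra_1^2^2"
  assumes GY: "mis_gdrazin X Y" and GZ: "mis_gdrazin X Z"
  shows "X ** Y ** (mat 1 - X ** Z) = 0 \<and> (mat 1 - X ** Z) ** (X ** Y) = 0"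
proof -
  have xy: "X ** Y = Y ** X" and yxy: "Y = Y ** X ** Y" using GY unfolding mis_gdrazin_def by auto
  have xz: "X ** Z = Z ** X" and zxz: "Z = Z ** X ** Z" and qz: "mquasinilpotent (X - X ** X ** Z)"
    using GZ unfolding mis_gdrazin_def by auto
  define f where "f = X ** Z"
  define q where "q = X - X ** X ** Z"
  define I where "I = (mat 1 :: 'b^2^2)"
  have ff: "f ** f = f" unfolding f_def using zxz by (metis matrix_mul_assoc)
  have ff2: "(I - f) ** (I - f) = I - f" unfolding I_def by (simp add: mm_diff_l mm_diff_r ff)
  have fx: "f ** X = X ** f" unfolding f_def using xz by (metis matrix_mul_assoc)
  have fx2: "(I - f) ** X = X ** (I - f)" unfolding I_def by (simp add: mm_diff_l mm_diff_r fx)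
  have q1: "q = X ** (I - f)" unfolding q_def f_def I_def by (simp add: mm_diff_l matrix_mul_assoc)
  have P1: "mpow q (Suc n) = mpow X (Suc n) ** (I - f)" for n
  proof (induction n)
    case 0 show ?case using q1 by simp
  next
    case (Suc n)
    have "mpow q (Suc (Suc n)) = mpow q (Suc n) ** q" by (rule mpow_Suc2)
    also have "\<dots> = mpow X (Suc n) ** ((I - f) ** X) ** (I - f)" using Suc q1 by (simp add: matrix_mul_assoc)
    also have "\<dots> = mpow X (Suc n) ** X ** ((I - f) ** (I - f))" using fx2 by (simp add: matrix_mul_assoc)
    also have "\<dots> = mpow X (Suc (Suc n)) ** (I - f)" using ff2 by (simp only: mpow_Suc2)
    finally show ?case .
  qed
  have P2: "mpow q (Suc n) = (I - f) ** mpow X (Suc n)" for n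
    using P1[of n] mpow_comm[OF fx2, of "Suc n"] by simp
  have yyx: "Y ** Y ** X = Y" using xy yxy by (metis matrix_mul_assoc)
  have xyy: "X ** Y ** Y = Y" using xy yxy by (metis matrix_mul_assoc)
  have E1: "X ** Y = mpow Y (Suc n) ** mpow X (Suc n)" for n
  proof (induction n)
    case 0 show ?case using xy by simp
  next
    case (Suc n)
    have a1: "mpow Y (Suc (Suc n)) = mpow Y n ** Y ** Y" by (simp only: mpow_Suc2)
    have a2: "mpow X (Suc (Suc n)) = X ** mpow X (Suc n)" by simp
    have "mpow Y (Suc (Suc n)) ** mpow X (Suc (Suc n)) = mpow Y n ** (Y ** Y ** X) ** mpow X (Suc n)"
      by (simp only: a1 a2 matrix_mul_assoc)
    also have "\<dots> = mpow Y n ** Y ** mpow X (Suc n)" using yyx by simp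
    also have "\<dots> = mpow Y (Suc n) ** mpow X (Suc n)" by (simp only: mpow_Suc2)
    finally show ?case using Suc by simp
  qed
  have E2: "X ** Y = mpow X (Suc n) ** mpow Y (Suc n)" for n
  proof (induction n)
    case 0 show ?case by simp
  next
    case (Suc n)
    have a1: "mpow Y (Suc (Suc n)) = Y ** Y ** mpow Y n" by (simp add: matrix_mul_assoc)
    have a2: "mpow X (Suc (Suc n)) = mpow X (Suc n) ** X" by (simp only: mpow_Suc2)
    have "mpow X (Suc (Suc n)) ** mpow Y (Suc (Suc n)) = mpow X (Suc n) ** (X ** Y ** Y) ** mpow Y n"
      by (simp only: a1 a2 matrix_mul_assoc)
    also have "\<dots> = mpow X (Suc n) ** Y ** mpow Y n" using xyy by simp
    also have "\<dots> = mpow X (Suc n) ** mpow Y (Suc n)" by (simp add: matrix_mul_assoc)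
    finally show ?case using Suc by simp
  qed
  have g0: "\<And>n. 0 \<le> mnorm (mpow q n)" by (rule mnorm_nonneg)
  have qq: "qnb (\<lambda>n. mnorm (mpow q n))" using qz unfolding q_def by (rule mqn_qnb)
  have "mnorm (X ** Y ** (I - f)) \<le> 0"
  proof (rule qnb_zero[OF qq g0 mnorm_nonneg, of 1])
    fix n :: nat assume "n > 0"
    then obtain m where m: "n = Suc m" by (cases n) auto
    have "X ** Y ** (I - f) = mpow Y n ** mpow q n" using E1[of m] P1[of m] m by (simp add: matrix_mul_assoc)
    also have "mnorm \<dots> \<le> mnorm (mpow Y n) * mnorm (mpow q n)" by (rule mnorm_mult)
    also have "\<dots> \<le> mnorm Y ^ n * mnorm (mpow q n)"
      using mnorm_mpow[of Y m] m by (intro mult_right_mono mnorm_nonneg) simp_all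
    finally show "mnorm (X ** Y ** (I - f)) \<le> 1 * mnorm Y ^ n * mnorm (mpow q n)" by simp
  qed simp
  moreover have "mnorm ((I - f) ** (X ** Y)) \<le> 0"
  proof (rule qnb_zero[OF qq g0 mnorm_nonneg, of 1])
    fix n :: nat assume "n > 0"
    then obtain m where m: "n = Suc m" by (cases n) auto
    have "(I - f) ** (X ** Y) = mpow q n ** mpow Y n" using E2[of m] P2[of m] m by (simp add: matrix_mul_assoc)
    also have "mnorm \<dots> \<le> mnorm (mpow q n) * mnorm (mpow Y n)" by (rule mnorm_mult)
    also have "\<dots> \<le> mnorm (mpow q n) * mnorm Y ^ n"
      using mnorm_mpow[of Y m] m by (intro mult_left_mono mnorm_nonneg) simp_all
    finally show "mnorm ((I - f) ** (X ** Y)) \<le> 1 * mnorm Y ^ n * mnorm (mpow q n)" by (simp add: mult_ac)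
  qed simp
  ultimately show ?thesis unfolding f_def I_def using mnorm_zero_iff by blast
qed

lemma mgd_unique:
  fixes X Y Z :: "'b::real_normed_algebra_1^2^2"
  assumes GY: "mis_gdrazin X Y" and GZ: "mis_gdrazin X Z"
  shows "Y = Z"
proof -
  have h1: "(mat 1 - X ** Z) ** (X ** Y) = 0" using mgd_half[OF GY GZ] by auto
  have h2: "X ** Z ** (mat 1 - X ** Y) = 0" using mgd_half[OF GZ GY] by auto
  have e1: "X ** Y = X ** Z ** (X ** Y)" using h1 by (simp add: mm_diff_r)
  have e2: "X ** Z = X ** Z ** (X ** Y)" using h2 by (simp add: mm_diff_l)
  have ef: "X ** Y = X ** Z" using e1 e2 by simp
  have xy: "X ** Y = Y ** X" and yxy: "Y = Y ** X ** Y" using GY unfolding mis_gdrazin_def by auto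
  have xz: "X ** Z = Z ** X" and zxz: "Z = Z ** X ** Z" using GZ unfolding mis_gdrazin_def by auto
  have "Y = Y ** (X ** Y)" using yxy by (simp add: matrix_mul_assoc)
  also have "\<dots> = Y ** (X ** Z)" using ef by simp
  also have "\<dots> = (Y ** X) ** Z" by (simp add: matrix_mul_assoc)
  also have "\<dots> = (X ** Z) ** Z" using xy ef by simp
  also have "\<dots> = Z" using xz zxz by (simp add: matrix_mul_assoc)
  finally show ?thesis .
qed

lemma mgd_eq:
  fixes X Y :: "'b::real_normed_algebra_1^2^2"
  assumes "mis_gdrazin X Y" shows "mgd X = Y"
  unfolding mgd_def using assms mgd_unique by blast

definition msc :: "complex \<Rightarrow> ('a::cbanach_algebra)^2^2 \<Rightarrow> 'a^2^2" where
  "msc z X = mat2 (scaleC z (X$1$1)) (scaleC z (X$1$2)) (scaleC z (X$2$1)) (scaleC z (X$2$2))"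

lemma scaleC_zero_left [simp]: "scaleC 0 (x::'a::cbanach_algebra) = 0"
  using scaleC_of_real[of 0 x] by simp

lemma msc_mat2: "msc z (mat2 a b c d) = mat2 (scaleC z a) (scaleC z b) (scaleC z c) (scaleC z d)"
  by (simp add: msc_def)

lemma msc_mult_l: "msc z X ** Y = msc z (X ** Y)"
  apply (subst (1 2) mat2_decomp[of X]) apply (subst (1 2) mat2_decomp[of Y])
  by (simp add: msc_mat2 mat2_mult scaleC_add_right scaleC_left_mult)

lemma msc_mult_r: "X ** msc z Y = msc z (X ** Y)"
  apply (subst (1 2) mat2_decomp[of X]) apply (subst (1 2) mat2_decomp[of Y])
  by (simp add: msc_mat2 mat2_mult scaleC_add_right scaleC_right_mult)

lemma msc_msc: "msc a (msc b X) = msc (a * b) X"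
  by (simp add: msc_def scaleC_scaleC)

lemma msc_add: "msc a X + msc b X = msc (a + b) X"
  by (simp add: msc_def mat2_add scaleC_add_left)

lemma msc_one [simp]: "msc 1 X = X"
  by (simp add: msc_def scaleC_one mat2_decomp[symmetric])

lemma msc_zero [simp]: "msc 0 X = 0"
  by (simp add: msc_def mat2_zero)

lemma mnorm_msc: "mnorm (msc z X) = cmod z * mnorm X"
  by (simp add: msc_def mnorm_mat2 norm_scaleC mnorm_def algebra_simps)

lemma mnorm_add: "mnorm (X + Y) \<le> mnorm X + mnorm Y"
proof -
  have t: "\<And>i j. norm ((X + Y)$i$j) \<le> norm (X$i$j) + norm (Y$i$j)"
    by (simp add: norm_triangle_ineq)
  show ?thesis unfolding mnorm_def using t[of 1 1] t[of 1 2] t[of 2 1] t[of 2 2] by linarith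
qed

lemma mnorm_sum: "mnorm (sum F K) \<le> (\<Sum>k\<in>K. mnorm (F k))"
proof (induction K rule: infinite_finite_induct)
  case (infinite A) thus ?case by (simp add: mnorm_def)
next
  case empty thus ?case by (simp add: mnorm_def)
next
  case (insert x F')
  thus ?case using mnorm_add[of "F x" "sum F F'"] by simp
qed

lemma mm_add_r: "((A::'b::semiring_1^'n^'m) + B) ** C = A ** C + B ** C"
  by (simp add: vec_eq_iff matrix_matrix_mult_def sum.distrib distrib_right)

lemma mm_sum_r: "(sum F K) ** (C::'b::semiring_1^'n^'n) = (\<Sum>k\<in>K. F k ** C)"
proof (induction K rule: infinite_finite_induct)
  case (infinite A) thus ?case by simp
next
  case empty thus ?case by simp
next
  case (insert x F')
  thus ?case by (simp add: mm_add_r)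
qed

primrec cf :: "complex \<Rightarrow> nat \<Rightarrow> nat \<Rightarrow> complex" where
  "cf m 0 k = (if k = 0 then 1 else 0)"
| "cf m (Suc n) k = cf m n k * m ^ k + (if k = 0 then 0 else cf m n (k - 1))"

lemma cf_zero: "n < k \<Longrightarrow> cf m n k = 0"
proof (induction n arbitrary: k)
  case 0 thus ?case by simp
next
  case (Suc n)
  thus ?case by simp
qed

lemma cf_bound: "cmod m \<le> 1 \<Longrightarrow> cmod (cf m n k) \<le> real (n choose k)"
proof (induction n arbitrary: k)
  case 0 thus ?case by simp
next
  case (Suc n)
  have a: "cmod (cf m n k * m ^ k) \<le> real (n choose k)"
  proof -
    have "cmod (cf m n k * m ^ k) = cmod (cf m n k) * cmod m ^ k" by (simp add: norm_mult norm_power)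
    also have "\<dots> \<le> real (n choose k) * 1"
      using Suc by (intro mult_mono power_le_one) auto
    finally show ?thesis by simp
  qed
  show ?case
  proof (cases k)
    case 0 thus ?thesis using a by simp
  next
    case (Suc j)
    have "cmod (cf m (Suc n) k) \<le> cmod (cf m n k * m ^ k) + cmod (cf m n j)"
      using Suc by (simp add: norm_triangle_ineq)
    also have "\<dots> \<le> real (n choose k) + real (n choose j)" using a Suc.IH[of j] \<open>cmod m \<le> 1\<close> by simp
    also have "\<dots> = real (Suc n choose k)" using Suc by simp
    finally show ?thesis .
  qed
qed

context
  fixes u w :: "('a::cbanach_algebra)^2^2" and m :: complex
  assumes wu: "w ** u = msc m (u ** w)"
begin

lemma wpow_u: "mpow w k ** u = msc (m ^ k) (u ** mpow w k)"
proof (induction k)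
  case 0 show ?case by simp
next
  case (Suc k)
  have "mpow w (Suc k) ** u = w ** (mpow w k ** u)" by (simp add: matrix_mul_assoc)
  also have "\<dots> = msc (m ^ k) ((w ** u) ** mpow w k)" unfolding Suc by (simp add: msc_mult_r matrix_mul_assoc)
  also have "\<dots> = msc (m ^ k * m) (u ** mpow w (Suc k))"
    unfolding wu by (simp add: msc_mult_l msc_msc matrix_mul_assoc)
  also have "m ^ k * m = m ^ Suc k" by (simp add: power_Suc2)
  finally show ?case .
qed

lemma expand: "mpow (u + w) n = (\<Sum>k\<le>n. msc (cf m n k) (mpow u (n - k) ** mpow w k))"
proof (induction n)
  case 0 show ?case by simp
next
  case (Suc n)
  define T where "T k = mpow u (Suc n - k) ** mpow w k" for k
  have "mpow (u + w) (Suc n) = mpow (u + w) n ** u + mpow (u + w) n ** w"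
    by (simp only: mpow_Suc2 matrix_add_ldistrib)
  also have "mpow (u + w) n ** u = (\<Sum>k\<le>n. msc (cf m n k * m ^ k) (T k))"
    unfolding Suc mm_sum_r
  proof (rule sum.cong[OF refl])
    fix k assume k: "k \<in> {..n}"
    have "msc (cf m n k) (mpow u (n - k) ** mpow w k) ** u = msc (cf m n k) (mpow u (n - k) ** (mpow w k ** u))"
      by (simp add: msc_mult_l matrix_mul_assoc)
    also have "\<dots> = msc (cf m n k * m ^ k) (mpow u (n - k) ** u ** mpow w k)"
      unfolding wpow_u by (simp add: msc_mult_r msc_msc matrix_mul_assoc mult.commute)
    also have "mpow u (n - k) ** u = mpow u (Suc n - k)" using k by (simp add: mpow_Suc2[symmetric] Suc_diff_le)
    finally show "msc (cf m n k) (mpow u (n - k) ** mpow w k) ** u = msc (cf m n k * m ^ k) (T k)"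
      unfolding T_def .
  qed
  also have "mpow (u + w) n ** w = (\<Sum>k\<le>n. msc (cf m n k) (T (Suc k)))"
    unfolding Suc mm_sum_r
  proof (rule sum.cong[OF refl])
    fix k assume k: "k \<in> {..n}"
    show "msc (cf m n k) (mpow u (n - k) ** mpow w k) ** w = msc (cf m n k) (T (Suc k))"
      unfolding T_def diff_Suc_Suc mpow_Suc2 by (simp only: msc_mult_l matrix_mul_assoc)
  qed
  also have "(\<Sum>k\<le>n. msc (cf m n k * m ^ k) (T k)) = (\<Sum>k\<le>Suc n. msc (cf m n k * m ^ k) (T k))"
    by (simp add: cf_zero)
  also have "(\<Sum>k\<le>n. msc (cf m n k) (T (Suc k))) = (\<Sum>k\<le>Suc n. msc (if k = 0 then 0 else cf m n (k - 1)) (T k))"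
    by (subst sum.atMost_Suc_shift) simp
  also have "(\<Sum>k\<le>Suc n. msc (cf m n k * m ^ k) (T k)) + (\<Sum>k\<le>Suc n. msc (if k = 0 then 0 else cf m n (k - 1)) (T k))
      = (\<Sum>k\<le>Suc n. msc (cf m (Suc n) k) (T k))"
    by (simp only: sum.distrib[symmetric] msc_add cf.simps(2))
  finally show ?case unfolding T_def .
qed

lemma expand_qn:
  assumes m1: "cmod m \<le> 1" and qu: "mquasinilpotent u" and qw: "mquasinilpotent w"
  shows "mquasinilpotent (u + w)"
proof (rule qnb_mqn, rule qnb_binom[OF mqn_qnb[OF qu] mnorm_nonneg mqn_qnb[OF qw] mnorm_nonneg, of 1])
  fix n
  have "mnorm (mpow (u + w) n) \<le> (\<Sum>k\<le>n. mnorm (msc (cf m n k) (mpow u (n - k) ** mpow w k)))"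
    unfolding expand by (rule mnorm_sum)
  also have "\<dots> \<le> (\<Sum>k\<le>n. real (n choose k) * (mnorm (mpow u (n - k)) * mnorm (mpow w k)))"
  proof (rule sum_mono)
    fix k
    show "mnorm (msc (cf m n k) (mpow u (n - k) ** mpow w k)) \<le> real (n choose k) * (mnorm (mpow u (n - k)) * mnorm (mpow w k))"
      unfolding mnorm_msc
      by (intro mult_mono cf_bound[OF m1] mnorm_mult mnorm_nonneg) auto
  qed
  finally show "mnorm (mpow (u + w) n) \<le> 1 * (\<Sum>k\<le>n. real (n choose k) * (mnorm (mpow u (n - k)) * mnorm (mpow w k)))"
    by simp
qed simp

end

lemma lcomm_qn:
  fixes u w :: "('a::cbanach_algebra)^2^2"
  assumes uw: "u ** w = msc l (w ** u)" and l: "l \<noteq> 0"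
    and qu: "mquasinilpotent u" and qw: "mquasinilpotent w"
  shows "mquasinilpotent (u + w)"
proof (cases "cmod l \<le> 1")
  case True
  have "mquasinilpotent (w + u)" by (rule expand_qn[OF uw True qw qu])
  thus ?thesis by (simp add: add.commute)
next
  case False
  have wu: "w ** u = msc (inverse l) (u ** w)" unfolding uw using l by (simp add: msc_msc)
  have "cmod (inverse l) \<le> 1" using False by (simp add: norm_inverse inverse_le_1_iff)
  thus ?thesis by (rule expand_qn[OF wu _ qu qw])
qed

lemma mpow_diag: "mpow (mat2 (a::'b::ring_1) 0 0 d) n = mat2 (a ^ n) 0 0 (d ^ n)"
  by (induction n) (simp_all add: mat2_one mat2_mult)


lemma mpow_off_even: "mpow (mat2 0 (b::'b::ring_1) c 0) (2 * n) = mat2 ((b * c) ^ n) 0 0 ((c * b) ^ n)"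
proof (induction n)
  case 0 show ?case by (simp add: mat2_one)
next
  case (Suc n)
  have "mpow (mat2 0 b c 0) (2 * Suc n) = mat2 0 b c 0 ** (mat2 0 b c 0 ** mpow (mat2 0 b c 0) (2 * n))"
    by simp
  also have "\<dots> = mat2 ((b * c) ^ Suc n) 0 0 ((c * b) ^ Suc n)"
    unfolding Suc by (simp add: mat2_mult mult.assoc)
  finally show ?case .
qed

lemma mpow_off_odd: "mpow (mat2 0 (b::'b::ring_1) c 0) (Suc (2 * n)) = mat2 0 (b * (c * b) ^ n) (c * (b * c) ^ n) 0"
  by (simp add: mpow_off_even mat2_mult)

lemma diag_qn:
  fixes a d :: "'b::real_normed_algebra_1"
  assumes "quasinilpotent a" "quasinilpotent d"
  shows "mquasinilpotent (mat2 a 0 0 d)"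
proof (rule qnb_mqn)
  have "qnb (\<lambda>n. norm (a ^ n) + norm (d ^ n))" by (intro qnb_add qn_qnb assms)
  thus "qnb (\<lambda>n. mnorm (mpow (mat2 a 0 0 d) n))"
    by (simp add: mpow_diag mnorm_mat2)
qed

lemma off_qn:
  fixes b c :: "'b::real_normed_algebra_1"
  assumes qbc: "quasinilpotent (b * c)" and qcb: "quasinilpotent (c * b)"
  shows "mquasinilpotent (mat2 0 b c 0)"
proof (rule qnb_mqn, rule qnb_evenodd)
  have "qnb (\<lambda>n. norm ((b * c) ^ n) + norm ((c * b) ^ n))" by (intro qnb_add qn_qnb assms)
  thus "qnb (\<lambda>n. mnorm (mpow (mat2 0 b c 0) (2 * n)))"
    by (simp add: mpow_off_even mnorm_mat2)
  have h1: "qnb (\<lambda>n. norm b * norm ((c * b) ^ n))"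
    by (rule qnb_le[OF qn_qnb[OF qcb] norm_ge_zero, of 1 "norm b"]) auto
  have h2: "qnb (\<lambda>n. norm c * norm ((b * c) ^ n))"
    by (rule qnb_le[OF qn_qnb[OF qbc] norm_ge_zero, of 1 "norm c"]) auto
  have "qnb (\<lambda>n. norm b * norm ((c * b) ^ n) + norm c * norm ((b * c) ^ n))"
    using qnb_add[OF h1 h2] .
  thus "qnb (\<lambda>n. mnorm (mpow (mat2 0 b c 0) (Suc (2 * n))))"
  proof (rule qnb_mono)
    fix n
    show "mnorm (mpow (mat2 0 b c 0) (Suc (2 * n))) \<le> norm b * norm ((c * b) ^ n) + norm c * norm ((b * c) ^ n)"
      unfolding mpow_off_odd mnorm_mat2 using norm_mult_ineq[of b "(c * b) ^ n"] norm_mult_ineq[of c "(b * c) ^ n"]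
      by simp
  qed
qed

context setup2
begin

lemma XdAd: "gd (B * C) * gd A = 0"
proof -
  have "gd (B * C) * gd A = gd (B * C) * A * (gd A * gd A)"
    using gz_xyy[OF s1.iA] by (simp add: mult.assoc)
  thus ?thesis using F4 by simp
qed

lemma f1: "A * (B * (C * (B * gd (C * B)))) = 0"
proof -
  have "C * (B * gd (C * B)) = gd (C * B) * (C * B)" using gz_comm[OF s1.iY] by (simp add: mult.assoc)
  hence "A * (B * (C * (B * gd (C * B)))) = A * B * gd (C * B) * (C * B)" by (simp add: mult.assoc)
  thus ?thesis using s1.F1 by simp
qed

lemma f3: "B * (D * (D * gd D)) = 0"
proof -
  have "D * (D * gd D) = gd D * (D * D)" using gz_comm[OF s2.iA] by (metis mult.assoc)
  hence "B * (D * (D * gd D)) = B * gd D * (D * D)" by (simp add: mult.assoc)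
  thus ?thesis using sw.F3 by simp
qed

lemma uw_entry:
  "(A - A * A * gd A) * (B - B * (C * B) * gd (C * B))
    = scaleC lam ((B - B * (C * B) * gd (C * B)) * (D - D * D * gd D))"
proof -
  have z1: "gd A * B = 0" "\<And>z. gd A * (B * z) = 0" using s1.AdB by (simp_all add: mult.assoc[symmetric])
  have z2: "gd (C * B) * D = 0" "\<And>z. gd (C * B) * (D * z) = 0" using sw.F4 by (simp_all add: mult.assoc[symmetric])
  have L: "(A - A * A * gd A) * (B - B * (C * B) * gd (C * B)) = A * B"
    using f1 z1 by (simp add: algebra_simps)
  have R: "(B - B * (C * B) * gd (C * B)) * (D - D * D * gd D) = B * D"
    using f3 z2 by (simp add: algebra_simps)
  show ?thesis unfolding L R by (rule AB)
qed

lemma bc_entry: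
  "(B - B * (C * B) * gd (C * B)) * (C - C * (B * C) * gd (B * C)) = B * C - B * C * (B * C) * gd (B * C)"
proof -
  have b: "B - B * (C * B) * gd (C * B) = B * gpi (C * B)" unfolding gpi_def by (simp add: algebra_simps)
  have c: "C - C * (B * C) * gd (B * C) = C * gpi (B * C)" unfolding gpi_def by (simp add: algebra_simps)
  have "B * gpi (C * B) * (C * gpi (B * C)) = B * (gpi (C * B) * C) * gpi (B * C)" by (simp add: mult.assoc)
  also have "\<dots> = B * C * (gpi (B * C) * gpi (B * C))" unfolding s1.Rc by (simp add: mult.assoc)
  also have "gpi (B * C) * gpi (B * C) = gpi (B * C)" unfolding gpi_def by (rule gz_pi_idem[OF s1.iX])
  also have "B * C * gpi (B * C) = B * C - B * C * (B * C) * gd (B * C)" unfolding gpi_def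
    by (simp add: algebra_simps)
  finally show ?thesis unfolding b c .
qed

end

lemma zc1: "x * y = 0 \<Longrightarrow> x * (y * z) = 0" for x y z :: "'b::ring"
  by (metis mult.assoc mult_zero_left)
lemma zc2: "x * (y * w) = 0 \<Longrightarrow> x * (y * (w * z)) = 0" for x y w z :: "'b::ring"
  by (metis mult.assoc mult_zero_left)
lemma zc3: "x * (y * (w * v)) = 0 \<Longrightarrow> x * (y * (w * (v * z))) = 0" for x y w v z :: "'b::ring"
  by (metis mult.assoc mult_zero_left)

theorem theorem3p3:
  fixes A B C D :: "'a::cbanach_algebra" and lam :: complex
    and M P Q :: "'a^2^2"
  assumes "lam \<noteq> 0"
    and "A \<in> gd_set" and "D \<in> gd_set"
    and "B * C \<in> gd_set" and "C * B \<in> gd_set"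
    and "A * B = scaleC lam (gpi A * B * D * gpi (C * B))"
    and "D * C = scaleC lam (gpi D * C * A * gpi (B * C))"
    and "M = mat2 A B C D"
    and "P = mat2 A 0 0 D"
    and "Q = mat2 0 B C 0"
  shows "M \<in> mgd_set \<and>
    mgd M =
      mat2 (gpi (B * C) * gd A) (B * gd (C * B) * gpi D)
           (C * gd (B * C) * gpi A) (gpi (C * B) * gd D)
    + (\<Sum>n. mpow (mgd Q) (n + 2) ** P ** mpow M n ** mpi P)
    + mpi Q ** (\<Sum>n. mpow M n ** Q ** mpow (mgd P) (n + 2))
    - (\<Sum>n. \<Sum>k. mpow (mgd Q) (k + 1) ** P ** mpow M (n + k) ** Q ** mpow (mgd P) (n + 2))
    - (\<Sum>n. mpow (mgd Q) (n + 2) ** P ** mpow M n ** Q ** mgd P)"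
proof -
  note as = assms
  interpret s: setup2 A B C D lam
    by unfold_locales (simp_all add: as)
  define Ad where "Ad = gd A"
  define Dd where "Dd = gd D"
  define Xd where "Xd = gd (B * C)"
  define Yd where "Yd = gd (C * B)"
  have iA: "is_gdrazin A Ad" unfolding Ad_def by (rule s.s1.iA)
  have iD: "is_gdrazin D Dd" unfolding Dd_def by (rule s.s2.iA)
  have iX: "is_gdrazin (B * C) Xd" unfolding Xd_def by (rule s.s1.iX)
  have iY: "is_gdrazin (C * B) Yd" unfolding Yd_def by (rule s.s1.iY)
  have mv: "Xd * B = B * Yd" "\<And>z. Xd * (B * z) = B * (Yd * z)"
           "Yd * C = C * Xd" "\<And>z. Yd * (C * z) = C * (Xd * z)"
    unfolding Xd_def Yd_def using s.s1.BYd s.s1.YdC by (simp_all add: mult.assoc[symmetric])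
  have cA: "Ad * A = A * Ad" "\<And>z. Ad * (A * z) = A * (Ad * z)"
    using gz_comm[OF iA] by (simp_all add: mult.assoc[symmetric])
  have cD: "Dd * D = D * Dd" "\<And>z. Dd * (D * z) = D * (Dd * z)"
    using gz_comm[OF iD] by (simp_all add: mult.assoc[symmetric])
  have xyy: "B * (C * (Xd * Xd)) = Xd" "\<And>z. B * (C * (Xd * (Xd * z))) = Xd * z"
            "C * (B * (Yd * Yd)) = Yd" "\<And>z. C * (B * (Yd * (Yd * z))) = Yd * z"
            "A * (Ad * Ad) = Ad" "\<And>z. A * (Ad * (Ad * z)) = Ad * z"
            "D * (Dd * Dd) = Dd" "\<And>z. D * (Dd * (Dd * z)) = Dd * z"
    using gz_xyy[OF iX] gz_xyy[OF iY] gz_xyy[OF iA] gz_xyy[OF iD]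
    by (simp_all add: mult.assoc) (metis mult.assoc)+
  have z0: "A * (B * Yd) = 0" "B * Dd = 0" "C * Ad = 0" "D * (C * Xd) = 0"
           "Ad * B = 0" "Yd * D = 0" "Xd * A = 0" "Dd * C = 0"
           "Xd * Ad = 0" "A * (B * (C * Xd)) = 0" "D * (C * (B * Yd)) = 0"
           "A * Xd = 0" "D * Yd = 0"
    unfolding Ad_def Dd_def Xd_def Yd_def
    using s.s1.F1 s.sw.F3 s.F3 s.s2.F1 s.s1.AdB s.sw.F4 s.F4 s.s2.AdB s.XdAd s.AXXd s.sw.AXXd
      s.AXd s.sw.AXd
    by (simp_all add: mult.assoc)
  have zB: "B * (D * Dd) = 0" using cD(1) z0(2) by (metis mult.assoc mult_zero_left)
  have zC: "C * (A * Ad) = 0" using cA(1) z0(3) by (metis mult.assoc mult_zero_left)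
  have zz: "\<And>z. A * (B * (Yd * z)) = 0" "\<And>z. B * (Dd * z) = 0" "\<And>z. C * (Ad * z) = 0"
    "\<And>z. D * (C * (Xd * z)) = 0" "\<And>z. Ad * (B * z) = 0" "\<And>z. Yd * (D * z) = 0"
    "\<And>z. Xd * (A * z) = 0" "\<And>z. Dd * (C * z) = 0" "\<And>z. Xd * (Ad * z) = 0"
    "\<And>z. A * (B * (C * (Xd * z))) = 0" "\<And>z. D * (C * (B * (Yd * z))) = 0"
    "\<And>z. A * (Xd * z) = 0" "\<And>z. D * (Yd * z) = 0"
    "\<And>z. B * (D * (Dd * z)) = 0" "\<And>z. C * (A * (Ad * z)) = 0"
    using z0 zB zC by (simp_all add: zc1 zc2 zc3)
  have zYD: "Yd * Dd = 0" "\<And>z. Yd * (Dd * z) = 0"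
  proof -
    have "Yd * Dd = Yd * (D * (Dd * Dd))" using xyy(7) by simp
    thus "Yd * Dd = 0" using zz(6) by simp
    thus "\<And>z. Yd * (Dd * z) = 0" by (simp add: zc1)
  qed
  note RS = mv cA cD xyy z0 zB zC zz zYD
  define Pd0 where "Pd0 = mat2 Ad 0 0 Dd"
  define Qd0 where "Qd0 = mat2 0 (B * Yd) (C * Xd) 0"
  define X0 where "X0 = mat2 Ad (B * Yd) (C * Xd) Dd"
  have gP: "mis_gdrazin P Pd0"
  proof -
    have c1: "P ** Pd0 = Pd0 ** P" unfolding as(9) Pd0_def by (simp add: mat2_mult mult.assoc RS)
    have c2: "Pd0 = Pd0 ** P ** Pd0" unfolding as(9) Pd0_def by (simp add: mat2_mult mult.assoc RS)
    have c3: "P - P ** P ** Pd0 = mat2 (A - A * A * Ad) 0 0 (D - D * D * Dd)"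
      unfolding as(9) Pd0_def by (simp add: mat2_mult mat2_diff mult.assoc RS)
    show ?thesis unfolding mis_gdrazin_def using c1 c2 c3 diag_qn[OF gz_qn[OF iA] gz_qn[OF iD]] by simp
  qed
  have wq: "mquasinilpotent (mat2 0 (B - B * (C * B) * Yd) (C - C * (B * C) * Xd) 0)"
  proof (rule off_qn)
    show "quasinilpotent ((B - B * (C * B) * Yd) * (C - C * (B * C) * Xd))"
      unfolding Xd_def Yd_def s.bc_entry by (rule gz_qn[OF s.s1.iX])
    show "quasinilpotent ((C - C * (B * C) * Xd) * (B - B * (C * B) * Yd))"
      unfolding Xd_def Yd_def s.sw.bc_entry by (rule gz_qn[OF s.s1.iY])
  qed
  have gQ: "mis_gdrazin Q Qd0"
  proof -
    have c1: "Q ** Qd0 = Qd0 ** Q" unfolding as(10) Qd0_def by (simp add: mat2_mult mult.assoc RS)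
    have c2: "Qd0 = Qd0 ** Q ** Qd0" unfolding as(10) Qd0_def by (simp add: mat2_mult mult.assoc RS)
    have c3: "Q - Q ** Q ** Qd0 = mat2 0 (B - B * (C * B) * Yd) (C - C * (B * C) * Xd) 0"
      unfolding as(10) Qd0_def by (simp add: mat2_mult mat2_diff mult.assoc RS)
    show ?thesis unfolding mis_gdrazin_def using c1 c2 c3 wq by simp
  qed
  have gM: "mis_gdrazin M X0"
  proof -
    have c1: "M ** X0 = X0 ** M" unfolding as(8) X0_def by (simp add: mat2_mult mult.assoc RS)
    have c2: "X0 = X0 ** M ** X0" unfolding as(8) X0_def
      by (simp add: mat2_mult mult.assoc distrib_left distrib_right RS)
    have c3: "M - M ** M ** X0 = mat2 (A - A * A * Ad) 0 0 (D - D * D * Dd)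
        + mat2 0 (B - B * (C * B) * Yd) (C - C * (B * C) * Xd) 0"
      unfolding as(8) X0_def by (simp add: mat2_mult mat2_diff mat2_add mult.assoc distrib_left distrib_right RS)
    have uw: "mat2 (A - A * A * Ad) 0 0 (D - D * D * Dd) ** mat2 0 (B - B * (C * B) * Yd) (C - C * (B * C) * Xd) 0
        = msc lam (mat2 0 (B - B * (C * B) * Yd) (C - C * (B * C) * Xd) 0 ** mat2 (A - A * A * Ad) 0 0 (D - D * D * Dd))"
      unfolding mat2_mult msc_mat2 Ad_def Dd_def Xd_def Yd_def
      by (simp add: s.uw_entry s.sw.uw_entry)
    have "mquasinilpotent (M - M ** M ** X0)"
      unfolding c3 by (rule lcomm_qn[OF uw as(1) diag_qn[OF gz_qn[OF iA] gz_qn[OF iD]] wq])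
    thus ?thesis unfolding mis_gdrazin_def using c1 c2 by simp
  qed
  have mP: "mgd P = Pd0" by (rule mgd_eq[OF gP])
  have mQ: "mgd Q = Qd0" by (rule mgd_eq[OF gQ])
  have mM: "mgd M = X0" by (rule mgd_eq[OF gM])
  have Mset: "M \<in> mgd_set" unfolding mgd_set_def using gM by blast
  have QdP: "Qd0 ** P = 0" unfolding Qd0_def as(9) by (simp add: mat2_mult mat2_zero mult.assoc RS)
  have QPd: "Q ** Pd0 = 0" unfolding Pd0_def as(10) by (simp add: mat2_mult mat2_zero mult.assoc RS)
  have t1: "mpow Qd0 (Suc n) ** P = 0" for n
  proof -
    have "mpow Qd0 (Suc n) ** P = mpow Qd0 n ** (Qd0 ** P)" by (simp only: mpow_Suc2 matrix_mul_assoc)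
    thus ?thesis using QdP by simp
  qed
  have t2: "Q ** mpow Pd0 (Suc n) = 0" for n
  proof -
    have "Q ** mpow Pd0 (Suc n) = (Q ** Pd0) ** mpow Pd0 n" by (simp add: matrix_mul_assoc)
    thus ?thesis using QPd by simp
  qed
  have n2: "\<And>n::nat. n + 2 = Suc (Suc n)" by simp
  have S1: "(\<lambda>n. mpow (mgd Q) (n + 2) ** P ** mpow M n ** mpi P) = (\<lambda>n. 0)"
    unfolding mQ n2 by (simp only: t1 times0_left)
  have S2: "(\<lambda>n. mpow M n ** Q ** mpow (mgd P) (n + 2)) = (\<lambda>n. 0)"
    unfolding mP n2 by (simp only: matrix_mul_assoc[symmetric] t2 times0_right)
  have S3: "(\<lambda>n. \<Sum>k. mpow (mgd Q) (k + 1) ** P ** mpow M (n + k) ** Q ** mpow (mgd P) (n + 2)) = (\<lambda>n. 0)"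
    unfolding mQ Suc_eq_plus1[symmetric] by (simp only: t1 times0_left suminf_zero)
  have S4: "(\<lambda>n. mpow (mgd Q) (n + 2) ** P ** mpow M n ** Q ** mgd P) = (\<lambda>n. 0)"
    unfolding mQ n2 by (simp only: t1 times0_left)
  have E: "mat2 (gpi (B * C) * gd A) (B * gd (C * B) * gpi D) (C * gd (B * C) * gpi A) (gpi (C * B) * gd D) = X0"
    unfolding X0_def gpi_def Ad_def[symmetric] Dd_def[symmetric] Xd_def[symmetric] Yd_def[symmetric]
    using z0(9) zz(6) zz(7) zYD(1)
    by (simp add: mat2_eq_iff left_diff_distrib right_diff_distrib mult.assoc)
  show ?thesis using Mset unfolding mM E S1 S2 S3 S4 by simp
qed

end
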